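(* Let $\sigma_a,\sigma_b$ be reasonable strategies of player $0$ in the escape arena $\mathcal{A}_\bot$ with $\sigma_a\subseteq\sigma_b$. Then $\mathcal{V}_{\sigma_a}\preceq\mathcal{V}_{\sigma_b}$, i.e. $\mathcal{V}_{\sigma_a}(s)\preceq\mathcal{V}_{\sigma_b}(s)$ for all vertices $s$.
   Context: Parity game arena: $\mathcal{A}=(V,E,o,c)$ with $V$ finite, $E\subseteq V\times V$, every vertex has a successor, owner map $o:V\to\{0,1\}$, colouring $c:V\to\{0,\dots,d-1\}$; $V_i=o^{-1}(i)$. An infinite vertex sequence is won by player $0$ iff the largest colour occurring infinitely often is even. A cycle is $i$-dominated if its largest colour has parity $i$. Escape arena $\mathcal{A}_\bot$: vertices $V\cup\{\bot\}$, edges $E\cup(V_0\times\{\bot\})$, $\bot$ owned by player $0$ with no outgoing edges. $E_0$ = edges of $\mathcal{A}_\bot$ leaving $V_0$, $E_1=E\cap(V_1\times V)$. A strategy of player $i$ is a set $\sigma\subseteq E_i$ with $s\sigma\neq\emptyset$ for all $s\in V_i$. $\mathcal{A}_\bot|_{\sigma,\tau}$ has edges $\sigma\cup\tau$, $\mathcal{A}_\bot|_\sigma$ has edges $\sigma\cup E_1$; plays are maximal paths. Colour profiles $\mathcal{P}=\mathbb{Z}^d\cup\{-\infty,\infty\}$, $\text{\o}$ zero vector; $\wp(s)$ unit vector at coordinate $c(s)$; for a finite path the sum over vertices in $V$; infinite play: $\infty$ if won by player $0$, else $-\infty$. Order $\prec$: $-\infty$ least, $\infty$ greatest; for distinct $p,p'\in\mathbb{Z}^d$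 with $k$ the largest differing index, $p\prec p'$ iff ($k$ even, $p_k<p'_k$) or ($k$ odd, $p_k>p'_k$). Valuation: $\mathcal{V}_\sigma(\bot)=\text{\o}$, $\mathcal{V}_\sigma(s)=\min^\prec_\tau\max^\prec\{\wp(\pi)\mid\pi$ a play in $\mathcal{A}_\bot|_{\sigma,\tau}$ from $s\}$, min over player-$1$ strategies $\tau$. $\sigma$ is reasonable if $\mathcal{A}_\bot|_\sigma$ has no $1$-dominated cycle. *)

theory Defs
  imports Main "HOL-Library.Poly_Mapping"
begin

text \<open>Parity game arena (V, E, owner, c) with colours in {0..<d}.
  The escape arena uses vertex type 'v option; None plays the role of the escape vertex bot.\<close>

definition arena :: "'v set \<Rightarrow> ('v \<times> 'v) set \<Rightarrow> ('v \<Rightarrow> nat) \<Rightarrow> ('v \<Rightarrow> nat) \<Rightarrow> nat \<Rightarrow> bool" where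
  "arena V E owner c d \<longleftrightarrow> finite V \<and> E \<subseteq> V \<times> V \<and> (\<forall>v\<in>V. \<exists>w. (v, w) \<in> E)
     \<and> (\<forall>v\<in>V. owner v \<in> {0, 1}) \<and> (\<forall>v\<in>V. c v < d)"

definition escE :: "'v set \<Rightarrow> ('v \<times> 'v) set \<Rightarrow> ('v \<Rightarrow> nat) \<Rightarrow> ('v option \<times> 'v option) set" where
  "escE V E owner = {(Some u, Some v) | u v. (u, v) \<in> E} \<union> {(Some u, None) | u. u \<in> V \<and> owner u = 0}"

definition E0 :: "'v set \<Rightarrow> ('v \<times> 'v) set \<Rightarrow> ('v \<Rightarrow> nat) \<Rightarrow> ('v option \<times> 'v option) set" where
  "E0 V E owner = {(x, y) \<in> escE V E owner. \<exists>u. x = Some u \<and> u \<in> V \<and> owner u = 0}"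

definition E1 :: "'v set \<Rightarrow> ('v \<times> 'v) set \<Rightarrow> ('v \<Rightarrow> nat) \<Rightarrow> ('v option \<times> 'v option) set" where
  "E1 V E owner = {(Some u, Some v) | u v. (u, v) \<in> E \<and> u \<in> V \<and> owner u = 1}"

definition strategy0 :: "'v set \<Rightarrow> ('v \<times> 'v) set \<Rightarrow> ('v \<Rightarrow> nat) \<Rightarrow> ('v option \<times> 'v option) set \<Rightarrow> bool" where
  "strategy0 V E owner \<sigma> \<longleftrightarrow> \<sigma> \<subseteq> E0 V E owner \<and> (\<forall>s\<in>V. owner s = 0 \<longrightarrow> (\<exists>t. (Some s, t) \<in> \<sigma>))"

definition strategy1 :: "'v set \<Rightarrow> ('v \<times> 'v) set \<Rightarrow> ('v \<Rightarrow> nat) \<Rightarrow> ('v option \<times> 'v option) set \<Rightarrow> bool" where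
  "strategy1 V E owner \<tau> \<longleftrightarrow> \<tau> \<subseteq> E1 V E owner \<and> (\<forall>s\<in>V. owner s = 1 \<longrightarrow> (\<exists>t. (Some s, t) \<in> \<tau>))"

definition fin_plays :: "('a \<times> 'a) set \<Rightarrow> 'a \<Rightarrow> 'a list set" where
  "fin_plays F s = {xs. xs \<noteq> [] \<and> hd xs = s \<and> (\<forall>i. Suc i < length xs \<longrightarrow> (xs ! i, xs ! Suc i) \<in> F)
                        \<and> (\<forall>y. (last xs, y) \<notin> F)}"

definition inf_plays :: "('a \<times> 'a) set \<Rightarrow> 'a \<Rightarrow> (nat \<Rightarrow> 'a) set" where
  "inf_plays F s = {f. f 0 = s \<and> (\<forall>i. (f i, f (Suc i)) \<in> F)}"

text \<open>Colour profiles: Z^d (as finitely supported nat-indexed integer vectors) plus -inf, +inf.\<close>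
datatype prof = NegInf | Fin "nat \<Rightarrow>\<^sub>0 int" | PosInf

fun prof_less :: "prof \<Rightarrow> prof \<Rightarrow> bool" where
  "prof_less NegInf q = (q \<noteq> NegInf)"
| "prof_less PosInf q = False"
| "prof_less (Fin p) NegInf = False"
| "prof_less (Fin p) PosInf = True"
| "prof_less (Fin p) (Fin q) = (p \<noteq> q \<and>
     (let k = Max {k. Poly_Mapping.lookup p k \<noteq> Poly_Mapping.lookup q k} in
        (even k \<and> Poly_Mapping.lookup p k < Poly_Mapping.lookup q k) \<or> (odd k \<and> Poly_Mapping.lookup p k > Poly_Mapping.lookup q k)))"

definition prof_le :: "prof \<Rightarrow> prof \<Rightarrow> bool" where
  "prof_le p q \<longleftrightarrow> p = q \<or> prof_less p q"

definition max_prof :: "prof set \<Rightarrow> prof" where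
  "max_prof A = (THE p. p \<in> A \<and> (\<forall>q\<in>A. prof_le q p))"

definition min_prof :: "prof set \<Rightarrow> prof" where
  "min_prof A = (THE p. p \<in> A \<and> (\<forall>q\<in>A. prof_le p q))"

definition path_prof :: "('v \<Rightarrow> nat) \<Rightarrow> 'v option list \<Rightarrow> prof" where
  "path_prof c xs = Fin (sum_list (map (\<lambda>x. Poly_Mapping.single (c (the x)) 1) (filter (\<lambda>x. x \<noteq> None) xs)))"

definition inf_won :: "('v \<Rightarrow> nat) \<Rightarrow> (nat \<Rightarrow> 'v option) \<Rightarrow> bool" where
  "inf_won c f \<longleftrightarrow> even (Max {k. \<exists>\<^sub>\<infinity> i. c (the (f i)) = k})"

definition play_profiles :: "('v \<Rightarrow> nat) \<Rightarrow> ('v option \<times> 'v option) set \<Rightarrow> 'v option \<Rightarrow> prof set" where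
  "play_profiles c F s = path_prof c ` fin_plays F s
     \<union> (\<lambda>f. if inf_won c f then PosInf else NegInf) ` inf_plays F s"

definition valuation :: "'v set \<Rightarrow> ('v \<times> 'v) set \<Rightarrow> ('v \<Rightarrow> nat) \<Rightarrow> ('v \<Rightarrow> nat)
    \<Rightarrow> ('v option \<times> 'v option) set \<Rightarrow> 'v option \<Rightarrow> prof" where
  "valuation V E owner c \<sigma> s = (case s of None \<Rightarrow> Fin 0
     | Some _ \<Rightarrow> min_prof {max_prof (play_profiles c (\<sigma> \<union> \<tau>) s) | \<tau>. strategy1 V E owner \<tau>})"

definition reasonable :: "'v set \<Rightarrow> ('v \<times> 'v) set \<Rightarrow> ('v \<Rightarrow> nat) \<Rightarrow> ('v \<Rightarrow> nat)
    \<Rightarrow> ('v option \<times> 'v option) set \<Rightarrow> bool" where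
  "reasonable V E owner c \<sigma> \<longleftrightarrow>
     (\<forall>vs. vs \<noteq> [] \<and> (\<forall>i<length vs. (Some (vs ! i), Some (vs ! ((i + 1) mod length vs))) \<in> \<sigma> \<union> E1 V E owner)
        \<longrightarrow> even (Max (c ` set vs)))"

end

theory Submission
  imports Defs "HOL-Library.Infinite_Set"
begin

definition Dset :: "(nat \<Rightarrow>\<^sub>0 int) \<Rightarrow> (nat \<Rightarrow>\<^sub>0 int) \<Rightarrow> nat set" where
  "Dset p q = {k. Poly_Mapping.lookup p k \<noteq> Poly_Mapping.lookup q k}"

lemma Dset_fin: "finite (Dset p q)"
proof -
  have "Dset p q \<subseteq> Poly_Mapping.keys p \<union> Poly_Mapping.keys q" unfolding Dset_def by (auto simp: in_keys_iff)
  thus ?thesis by (rule finite_subset) simp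
qed

lemma Dset_ne: "p \<noteq> q \<Longrightarrow> Dset p q \<noteq> {}"
  unfolding Dset_def by (auto intro: poly_mapping_eqI)

lemma Dset_sym: "Dset p q = Dset q p" unfolding Dset_def by auto

lemma Dset_Max_in: "p \<noteq> q \<Longrightarrow> Poly_Mapping.lookup p (Max (Dset p q)) \<noteq> Poly_Mapping.lookup q (Max (Dset p q))"
  using Max_in[OF Dset_fin Dset_ne] unfolding Dset_def by auto

lemma Dset_above: "j > Max (Dset p q) \<Longrightarrow> Poly_Mapping.lookup p j = Poly_Mapping.lookup q j"
proof (rule ccontr)
  assume "j > Max (Dset p q)" "Poly_Mapping.lookup p j \<noteq> Poly_Mapping.lookup q j"
  then have "j \<in> Dset p q" unfolding Dset_def by auto
  then have "j \<le> Max (Dset p q)" using Dset_fin by simp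
  thus False using \<open>j > _\<close> by simp
qed

lemma Dset_Max_eq: assumes "\<And>j. j > k \<Longrightarrow> Poly_Mapping.lookup p j = Poly_Mapping.lookup q j"
  and "Poly_Mapping.lookup p k \<noteq> Poly_Mapping.lookup q k"
  shows "Max (Dset p q) = k"
proof (rule Max_eqI[OF Dset_fin])
  fix y assume "y \<in> Dset p q" thus "y \<le> k" using assms(1)[of y] unfolding Dset_def by force
next show "k \<in> Dset p q" using assms(2) unfolding Dset_def by auto
qed

definition lessF :: "(nat \<Rightarrow>\<^sub>0 int) \<Rightarrow> (nat \<Rightarrow>\<^sub>0 int) \<Rightarrow> nat \<Rightarrow> bool" where
  "lessF p q k \<longleftrightarrow> (even k \<and> Poly_Mapping.lookup p k < Poly_Mapping.lookup q k) \<or> (odd k \<and> Poly_Mapping.lookup p k > Poly_Mapping.lookup q k)"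

lemma prof_less_Fin[simp]: "prof_less (Fin p) (Fin q) \<longleftrightarrow> p \<noteq> q \<and> lessF p q (Max (Dset p q))"
  by (simp add: Dset_def lessF_def Let_def)
declare prof_less.simps(5)[simp del]

lemma prof_less_irrefl: "\<not> prof_less p p"
  by (cases p) (auto simp: prof_less_Fin)

lemma prof_less_asym: "prof_less p q \<Longrightarrow> \<not> prof_less q p"
proof (cases p; cases q)
  fix a b assume "prof_less p q" "p = Fin a" "q = Fin b"
  thus "\<not> prof_less q p" by (auto simp: Dset_sym lessF_def)
qed auto

lemma prof_less_total: "p \<noteq> q \<Longrightarrow> prof_less p q \<or> prof_less q p"
proof (cases p; cases q)
  fix a b assume "p \<noteq> q" "p = Fin a" "q = Fin b"
  then have "a \<noteq> b" by simp
  from Dset_Max_in[OF this] show ?thesis using \<open>a\<noteq>b\<close> \<open>p = Fin a\<close> \<open>q = Fin b\<close>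
    by (auto simp: Dset_sym lessF_def)
qed auto

lemma lessF_trans:
  assumes pq: "a \<noteq> b" "lessF a b (Max (Dset a b))" and qr: "b \<noteq> e" "lessF b e (Max (Dset b e))"
  shows "a \<noteq> e \<and> lessF a e (Max (Dset a e))"
proof -
  define k1 where "k1 = Max (Dset a b)"
  define k2 where "k2 = Max (Dset b e)"
  note a1 = Dset_above[where p=a and q=b, folded k1_def] and a2 = Dset_above[where p=b and q=e, folded k2_def]
  have i1: "Poly_Mapping.lookup a k1 \<noteq> Poly_Mapping.lookup b k1" using Dset_Max_in[OF pq(1)] k1_def by simp
  have i2: "Poly_Mapping.lookup b k2 \<noteq> Poly_Mapping.lookup e k2" using Dset_Max_in[OF qr(1)] k2_def by simp
  consider "k2 < k1" | "k1 < k2" | "k1 = k2" by linarith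
  then show ?thesis
  proof cases
    case 1
    have "Max (Dset a e) = k1"
      apply (rule Dset_Max_eq) using a1 a2 1 i1 by fastforce+
    moreover have "Poly_Mapping.lookup b k1 = Poly_Mapping.lookup e k1" using a2 1 by blast
    ultimately show ?thesis using pq i1 k1_def unfolding lessF_def by force
  next
    case 2
    have "Max (Dset a e) = k2"
      apply (rule Dset_Max_eq) using a1 a2 2 i2 by fastforce+
    moreover have "Poly_Mapping.lookup a k2 = Poly_Mapping.lookup b k2" using a1 2 by blast
    ultimately show ?thesis using qr i2 k2_def unfolding lessF_def by force
  next
    case 3
    have lt: "lessF a e k1" using pq qr 3 k1_def k2_def unfolding lessF_def by force
    hence ne: "Poly_Mapping.lookup a k1 \<noteq> Poly_Mapping.lookup e k1" unfolding lessF_def by auto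
    have "Max (Dset a e) = k1"
      apply (rule Dset_Max_eq) using a1 a2 3 ne by fastforce+
    then show ?thesis using lt ne by auto
  qed
qed

lemma prof_less_trans: "prof_less p q \<Longrightarrow> prof_less q r \<Longrightarrow> prof_less p r"
proof (cases p; cases q; cases r)
  fix a b e assume "prof_less p q" "prof_less q r" "p = Fin a" "q = Fin b" "r = Fin e"
  thus "prof_less p r" using lessF_trans[of a b e] by simp
qed auto

lemma prof_le_trans: "prof_le p q \<Longrightarrow> prof_le q r \<Longrightarrow> prof_le p r"
  unfolding prof_le_def using prof_less_trans by blast

lemma prof_le_total: "prof_le p q \<or> prof_le q p"
  unfolding prof_le_def using prof_less_total by blast

lemma prof_le_antisym: "prof_le p q \<Longrightarrow> prof_le q p \<Longrightarrow> p = q"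
  unfolding prof_le_def using prof_less_asym by blast

lemma prof_le_PosInf: "prof_le p PosInf"
  unfolding prof_le_def by (cases p) auto

lemma exists_max: "finite A \<Longrightarrow> A \<noteq> {} \<Longrightarrow> \<exists>p\<in>A. \<forall>q\<in>A. prof_le q p"
proof (induction A rule: finite_ne_induct)
  case (singleton x) thus ?case by (simp add: prof_le_def)
next
  case (insert x A)
  then obtain m where m: "m \<in> A" "\<forall>q\<in>A. prof_le q m" by blast
  show ?case
  proof (cases "prof_le x m")
    case True thus ?thesis using m by blast
  next
    case False
    hence "prof_le m x" using prof_le_total by blast
    thus ?thesis using m prof_le_trans by (auto simp: prof_le_def)
  qed
qed

lemma exists_min: "finite A \<Longrightarrow> A \<noteq> {} \<Longrightarrow> \<exists>p\<in>A. \<forall>q\<in>A. prof_le p q"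
proof (induction A rule: finite_ne_induct)
  case (singleton x) thus ?case by (simp add: prof_le_def)
next
  case (insert x A)
  then obtain m where m: "m \<in> A" "\<forall>q\<in>A. prof_le m q" by blast
  show ?case
  proof (cases "prof_le m x")
    case True thus ?thesis using m by blast
  next
    case False
    hence "prof_le x m" using prof_le_total by blast
    thus ?thesis using m prof_le_trans by (auto simp: prof_le_def)
  qed
qed

lemma max_prof_prop: assumes "\<exists>p\<in>A. \<forall>q\<in>A. prof_le q p"
  shows "max_prof A \<in> A \<and> (\<forall>q\<in>A. prof_le q (max_prof A))"
proof -
  have "\<exists>!p. p \<in> A \<and> (\<forall>q\<in>A. prof_le q p)" using assms prof_le_antisym by blast
  thus ?thesis unfolding max_prof_def by (rule theI')
qed

lemma min_prof_prop: assumes "\<exists>p\<in>A. \<forall>q\<in>A. prof_le p q"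
  shows "min_prof A \<in> A \<and> (\<forall>q\<in>A. prof_le (min_prof A) q)"
proof -
  have "\<exists>!p. p \<in> A \<and> (\<forall>q\<in>A. prof_le p q)" using assms prof_le_antisym by blast
  thus ?thesis unfolding min_prof_def by (rule theI')
qed



definition good :: "('a \<times> 'a) set \<Rightarrow> ('a \<Rightarrow> nat) \<Rightarrow> bool" where
  "good F col \<longleftrightarrow> (\<forall>xs. xs \<noteq> [] \<and> (\<forall>i<length xs. (xs ! i, xs ! ((i + 1) mod length xs)) \<in> F)
        \<longrightarrow> even (Max (col ` set xs)))"

lemma G1:
  assumes W: "finite W" and fW: "\<And>n. f n \<in> W" and fF: "\<And>n. (f n, f (Suc n)) \<in> F"
    and g: "good F col"
  shows "even (Max {k. \<exists>\<^sub>\<infinity> i. col (f i) = k})"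
proof -
  define I where "I = {w \<in> W. \<exists>\<^sub>\<infinity> n. f n = w}"
  define N where "N = (\<Union>w\<in>W - I. {n. f n = w})"
  have "finite N" unfolding N_def I_def using W by (auto simp: frequently_cofinite)
  then obtain T where T: "N \<subseteq> {..<T}" using finite_nat_bounded by blast
  have fT: "f n \<in> I" if "n \<ge> T" for n
  proof (rule ccontr)
    assume "f n \<notin> I" then have "n \<in> N" unfolding N_def using fW[of n] by auto
    thus False using T that by auto
  qed
  define K where "K = {k. \<exists>\<^sub>\<infinity> i. col (f i) = k}"
  have KI: "K = col ` I"
  proof
    show "col ` I \<subseteq> K"
    proof
      fix k assume "k \<in> col ` I"
      then obtain w where w: "w \<in> I" "k = col w" by blast
      hence "\<exists>\<^sub>\<infinity> n. f n = w" unfolding I_def by auto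
      hence "\<exists>\<^sub>\<infinity> n. col (f n) = k" by (rule INFM_mono) (simp add: w)
      thus "k \<in> K" unfolding K_def by simp
    qed
  next
    show "K \<subseteq> col ` I"
    proof
      fix k assume "k \<in> K"
      hence "\<exists>\<^sub>\<infinity> n. col (f n) = k" unfolding K_def by simp
      then obtain n where n: "T \<le> n" "col (f n) = k" unfolding INFM_nat_le by blast
      thus "k \<in> col ` I" using fT by blast
    qed
  qed
  have "finite I" unfolding I_def using W by simp
  moreover have "I \<noteq> {}" using fT[of T] by auto
  ultimately have "Max K \<in> K" unfolding KI by simp
  then obtain v where v: "v \<in> I" "col v = Max K" unfolding KI by auto
  hence "\<exists>\<^sub>\<infinity> n. f n = v" unfolding I_def by simp
  then obtain a where a: "T \<le> a" "f a = v" unfolding INFM_nat_le by blast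
  from \<open>\<exists>\<^sub>\<infinity> n. f n = v\<close> obtain b where b: "Suc a \<le> b" "f b = v" unfolding INFM_nat_le by blast
  define xs where "xs = map f [a..<b]"
  have lx: "length xs = b - a" and nx: "\<And>i. i < b - a \<Longrightarrow> xs ! i = f (a + i)"
    unfolding xs_def by auto
  have "xs \<noteq> []" using lx b by auto
  moreover have "\<forall>i<length xs. (xs ! i, xs ! ((i + 1) mod length xs)) \<in> F"
  proof (intro allI impI)
    fix i assume i: "i < length xs"
    have "xs ! ((i + 1) mod length xs) = f (a + (i + 1))"
    proof (cases "i + 1 < length xs")
      case True thus ?thesis using nx lx by simp
    next
      case False
      hence "i + 1 = length xs" using i by simp
      thus ?thesis using nx[of 0] lx a b by simp
    qed
    thus "(xs ! i, xs ! ((i + 1) mod length xs)) \<in> F" using fF[of "a+i"] nx[of i] i lx by simp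
  qed
  ultimately have ev: "even (Max (col ` set xs))" using g unfolding good_def by blast
  have "Max (col ` set xs) = Max K"
  proof (rule Max_eqI)
    show "finite (col ` set xs)" by simp
  next
    fix y assume "y \<in> col ` set xs"
    then obtain n where "a \<le> n" "y = col (f n)" unfolding xs_def by auto
    hence "y \<in> K" unfolding KI using fT a by auto
    thus "y \<le> Max K" using \<open>finite I\<close> unfolding KI by simp
  next
    show "Max K \<in> col ` set xs" using v a b unfolding xs_def by force
  qed
  thus ?thesis using ev K_def by simp
qed

definition path :: "('a \<times> 'a) set \<Rightarrow> 'a \<Rightarrow> 'a list \<Rightarrow> bool" where
  "path F s xs \<longleftrightarrow> xs \<noteq> [] \<and> hd xs = s \<and> (\<forall>i. Suc i < length xs \<longrightarrow> (xs ! i, xs ! Suc i) \<in> F)"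

lemma path_W: assumes "path F s xs" "s \<in> W" "\<And>x y. (x, y) \<in> F \<Longrightarrow> y \<in> W"
  shows "set xs \<subseteq> W"
proof
  fix x assume "x \<in> set xs"
  then obtain i where i: "i < length xs" "x = xs ! i" by (auto simp: in_set_conv_nth)
  show "x \<in> W"
  proof (cases i)
    case 0 thus ?thesis using assms i by (auto simp: path_def hd_conv_nth)
  next
    case (Suc j) thus ?thesis using assms i unfolding path_def by blast
  qed
qed

lemma path_distinct: assumes "path F s xs" "inf_plays F s = {}"
  shows "distinct xs"
proof (rule ccontr)
  assume "\<not> distinct xs"
  then obtain i j where ij: "i < j" "j < length xs" "xs ! i = xs ! j"
    unfolding distinct_conv_nth by (metis linorder_neqE_nat)
  define ix where "ix = rec_nat 0 (\<lambda>_ m. if Suc m = j then i else Suc m)"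
  have ix0: "ix 0 = 0" and ixS: "\<And>n. ix (Suc n) = (if Suc (ix n) = j then i else Suc (ix n))"
    unfolding ix_def by simp_all
  have ixl: "ix n < j" for n
    by (induction n) (use ij in \<open>auto simp: ix0 ixS\<close>)
  define f where "f n = xs ! ix n" for n
  have "f \<in> inf_plays F s"
    unfolding inf_plays_def
  proof (intro CollectI conjI allI)
    show "f 0 = s" using assms(1) unfolding f_def ix0 path_def by (metis hd_conv_nth)
  next
    fix n
    have e: "(xs ! ix n, xs ! Suc (ix n)) \<in> F" using assms(1) ixl[of n] ij unfolding path_def by simp
    show "(f n, f (Suc n)) \<in> F"
    proof (cases "Suc (ix n) = j")
      case True thus ?thesis using e ij unfolding f_def ixS by simp
    next
      case False thus ?thesis using e unfolding f_def ixS by simp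
    qed
  qed
  thus False using assms(2) by simp
qed

lemma G2:
  assumes W: "finite W" and s: "s \<in> W" and tg: "\<And>x y. (x, y) \<in> F \<Longrightarrow> y \<in> W"
    and ni: "inf_plays F s = {}"
  shows "finite (fin_plays F s) \<and> fin_plays F s \<noteq> {}"
proof -
  define Ps where "Ps = {xs. path F s xs}"
  have "Ps \<subseteq> {xs. set xs \<subseteq> W \<and> length xs \<le> card W}"
  proof
    fix xs assume "xs \<in> Ps"
    hence p: "path F s xs" unfolding Ps_def by simp
    have sw: "set xs \<subseteq> W" using path_W[OF p s tg] .
    have "length xs = card (set xs)" using path_distinct[OF p ni] by (simp add: distinct_card)
    also have "\<dots> \<le> card W" using sw W by (rule card_mono[rotated])
    finally show "xs \<in> {xs. set xs \<subseteq> W \<and> length xs \<le> card W}" using sw by simp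
  qed
  hence finP: "finite Ps" using finite_lists_length_le[OF W] finite_subset by blast
  have fpP: "fin_plays F s \<subseteq> Ps" unfolding Ps_def fin_plays_def path_def by auto
  have "[s] \<in> Ps" unfolding Ps_def path_def by simp
  hence neL: "length ` Ps \<noteq> {}" by blast
  define L where "L = Max (length ` Ps)"
  have "L \<in> length ` Ps" unfolding L_def using finP neL by simp
  then obtain xs where xs: "xs \<in> Ps" "length xs = L" by blast
  have "xs \<in> fin_plays F s"
  proof -
    have "\<forall>y. (last xs, y) \<notin> F"
    proof (intro allI notI)
      fix y assume y: "(last xs, y) \<in> F"
      have p: "path F s xs" using xs unfolding Ps_def by simp
      have "path F s (xs @ [y])" unfolding path_def
      proof (intro conjI allI impI)
        show "hd (xs @ [y]) = s" using p unfolding path_def by simp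
      next
        fix i assume i: "Suc i < length (xs @ [y])"
        show "((xs @ [y]) ! i, (xs @ [y]) ! Suc i) \<in> F"
        proof (cases "Suc i < length xs")
          case True thus ?thesis using p i unfolding path_def by (simp add: nth_append)
        next
          case False
          hence "i = length xs - 1" using i by simp
          moreover have "xs \<noteq> []" using p unfolding path_def by simp
          ultimately show ?thesis using y by (simp add: nth_append last_conv_nth)
        qed
      qed simp
      hence "length (xs @ [y]) \<in> length ` Ps" unfolding Ps_def by blast
      hence "length (xs @ [y]) \<le> L" unfolding L_def using finP by simp
      thus False using xs by simp
    qed
    thus ?thesis using xs unfolding Ps_def path_def fin_plays_def by auto
  qed
  thus ?thesis using finP fpP finite_subset by blast
qed


lemma inf_W: assumes "f \<in> inf_plays F s" "s \<in> W" "\<And>x y. (x, y) \<in> F \<Longrightarrow> y \<in> W"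
  shows "f n \<in> W"
  using assms by (cases n) (auto simp: inf_plays_def)

lemma has_max:
  fixes F :: "('v option \<times> 'v option) set"
  assumes W: "finite W" and s: "s \<in> W" and tg: "\<And>x y. (x, y) \<in> F \<Longrightarrow> y \<in> W"
    and g: "good F (\<lambda>x. c (the x))"
  shows "\<exists>p\<in>play_profiles c F s. \<forall>q\<in>play_profiles c F s. prof_le q p"
proof (cases "inf_plays F s = {}")
  case True
  from G2[OF W s tg True] have "finite (path_prof c ` fin_plays F s)" "path_prof c ` fin_plays F s \<noteq> {}"
    by auto
  moreover have "play_profiles c F s = path_prof c ` fin_plays F s"
    unfolding play_profiles_def using True by simp
  ultimately show ?thesis using exists_max[of "path_prof c ` fin_plays F s"] by presburger
next
  case False
  then obtain f where f: "f \<in> inf_plays F s" by blast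
  have "even (Max {k. \<exists>\<^sub>\<infinity> i. c (the (f i)) = k})"
  proof -
    have fW: "\<And>n. f n \<in> W" using inf_W[OF f s tg] .
    have fF: "\<And>n. (f n, f (Suc n)) \<in> F" using f by (simp add: inf_plays_def)
    show ?thesis using G1[where W=W and f=f and F=F and col="\<lambda>x. c (the x)", OF W fW fF g] by simp
  qed
  hence "inf_won c f" unfolding inf_won_def .
  hence "PosInf \<in> (\<lambda>f. if inf_won c f then PosInf else NegInf) ` inf_plays F s" using f by (intro image_eqI[of _ _ f]) simp_all
  hence "PosInf \<in> play_profiles c F s" unfolding play_profiles_def by (rule UnI2)
  thus ?thesis using prof_le_PosInf by blast
qed

lemma mono_profiles:
  assumes sub: "F1 \<subseteq> F2" and s: "s \<in> W" and tg: "\<And>x y. (x, y) \<in> F1 \<Longrightarrow> y \<in> W"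
    and de: "\<And>x y. x \<in> W \<Longrightarrow> (x, y) \<in> F2 \<Longrightarrow> \<exists>z. (x, z) \<in> F1"
  shows "play_profiles c F1 s \<subseteq> play_profiles c F2 s"
proof -
  have "fin_plays F1 s \<subseteq> fin_plays F2 s"
  proof
    fix xs assume xs: "xs \<in> fin_plays F1 s"
    hence p: "path F1 s xs" unfolding fin_plays_def path_def by auto
    have "xs \<noteq> []" using p unfolding path_def by simp
    have sW: "set xs \<subseteq> W" by (rule path_W[OF p s tg])
    have lW: "last xs \<in> W" using \<open>xs \<noteq> []\<close> sW by (meson last_in_set subsetD)
    have nF1: "\<forall>y. (last xs, y) \<notin> F1" using xs unfolding fin_plays_def by simp
    have "\<forall>y. (last xs, y) \<notin> F2"
    proof (intro allI notI)
      fix y assume "(last xs, y) \<in> F2"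
      from de[OF lW this] nF1 show False by blast
    qed
    moreover have "\<forall>i. Suc i < length xs \<longrightarrow> (xs ! i, xs ! Suc i) \<in> F2"
      using p sub unfolding path_def by blast
    ultimately show "xs \<in> fin_plays F2 s" using p unfolding fin_plays_def path_def by simp
  qed
  moreover have "inf_plays F1 s \<subseteq> inf_plays F2 s" using sub unfolding inf_plays_def by blast
  ultimately show ?thesis unfolding play_profiles_def by blast
qed


lemma tgt:
  assumes ar: "arena V E owner c d" and s0: "strategy0 V E owner \<sigma>" and s1: "strategy1 V E owner \<tau>"
    and e: "(x, y) \<in> \<sigma> \<union> \<tau>"
  shows "y \<in> insert None (Some ` V) \<and> (\<exists>u\<in>V. x = Some u)"
proof -
  have EV: "E \<subseteq> V \<times> V" using ar unfolding arena_def by simp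
  from e show ?thesis
  proof
    assume "(x, y) \<in> \<sigma>"
    hence "(x, y) \<in> E0 V E owner" using s0 unfolding strategy0_def by blast
    thus ?thesis using EV unfolding E0_def escE_def by blast
  next
    assume "(x, y) \<in> \<tau>"
    hence "(x, y) \<in> E1 V E owner" using s1 unfolding strategy1_def by blast
    thus ?thesis using EV unfolding E1_def by blast
  qed
qed

lemma goodF:
  assumes ar: "arena V E owner c d" and s0: "strategy0 V E owner \<sigma>" and s1: "strategy1 V E owner \<tau>"
    and r: "reasonable V E owner c \<sigma>"
  shows "good (\<sigma> \<union> \<tau>) (\<lambda>x. c (the x))"
  unfolding good_def
proof (intro allI impI)
  fix xs :: "'a option list"
  assume h: "xs \<noteq> [] \<and> (\<forall>i<length xs. (xs ! i, xs ! ((i + 1) mod length xs)) \<in> \<sigma> \<union> \<tau>)"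
  have S: "Some (the (xs ! i)) = xs ! i" if "i < length xs" for i
    using tgt[OF ar s0 s1, of "xs ! i"] h that by force
  define vs where "vs = map the xs"
  have "vs \<noteq> []" using h vs_def by simp
  moreover have "\<forall>i<length vs. (Some (vs ! i), Some (vs ! ((i + 1) mod length vs))) \<in> \<sigma> \<union> E1 V E owner"
  proof (intro allI impI)
    fix i assume i: "i < length vs"
    hence i': "i < length xs" by (simp add: vs_def)
    have m: "(i + 1) mod length xs < length xs" using i' by (metis gr_implies_not0 mod_less_divisor neq0_conv)
    have "(xs ! i, xs ! ((i + 1) mod length xs)) \<in> \<sigma> \<union> \<tau>" using h i' by blast
    hence "(xs ! i, xs ! ((i + 1) mod length xs)) \<in> \<sigma> \<union> E1 V E owner"
      using s1 unfolding strategy1_def by blast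
    thus "(Some (vs ! i), Some (vs ! ((i + 1) mod length vs))) \<in> \<sigma> \<union> E1 V E owner"
      using S[OF i'] S[OF m] i' m by (simp add: vs_def)
  qed
  ultimately have "even (Max (c ` set vs))" using r unfolding reasonable_def by blast
  moreover have "c ` set vs = (\<lambda>x. c (the x)) ` set xs" unfolding vs_def by auto
  ultimately show "even (Max ((\<lambda>x. c (the x)) ` set xs))" by simp
qed

lemma deadF:
  assumes ar: "arena V E owner c d" and s0: "strategy0 V E owner \<sigma>a" and s0': "strategy0 V E owner \<sigma>b"
    and s1: "strategy1 V E owner \<tau>"
    and x: "x \<in> insert None (Some ` V)" and e: "(x, y) \<in> \<sigma>b \<union> \<tau>"
  shows "\<exists>z. (x, z) \<in> \<sigma>a \<union> \<tau>"
proof -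
  obtain u where u: "u \<in> V" "x = Some u" using tgt[OF ar s0' s1 e] by blast
  have "owner u \<in> {0, 1}" using ar u unfolding arena_def by blast
  thus ?thesis
  proof
    assume "owner u = 0" thus ?thesis using s0 u unfolding strategy0_def by blast
  next
    assume "owner u \<in> {1}" thus ?thesis using s1 u unfolding strategy1_def by blast
  qed
qed

theorem mainTheorem12:
  fixes V :: "'v set" and E :: "('v \<times> 'v) set" and owner c :: "'v \<Rightarrow> nat" and d :: nat
    and \<sigma>a \<sigma>b :: "('v option \<times> 'v option) set"
  assumes "arena V E owner c d"
    and "strategy0 V E owner \<sigma>a" and "reasonable V E owner c \<sigma>a"
    and "strategy0 V E owner \<sigma>b" and "reasonable V E owner c \<sigma>b"
    and "\<sigma>a \<subseteq> \<sigma>b"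
  shows "\<forall>s \<in> insert None (Some ` V).
           prof_le (valuation V E owner c \<sigma>a s) (valuation V E owner c \<sigma>b s)"
proof
  note ar = assms(1) and sa = assms(2) and ra = assms(3) and sb = assms(4) and rb = assms(5)
    and sub = assms(6)
  define W where "W = insert None (Some ` V)"
  have finV: "finite V" using ar unfolding arena_def by simp
  hence finW: "finite W" unfolding W_def by simp
  have finE: "finite E" using ar finV unfolding arena_def by (meson finite_SigmaI finite_subset)
  define Str where "Str = {\<tau>. strategy1 V E owner \<tau>}"
  have "E1 V E owner \<subseteq> (\<lambda>(u, v). (Some u, Some v)) ` E" unfolding E1_def by auto
  hence "finite (E1 V E owner)" using finE finite_subset by blast
  hence finS: "finite Str" unfolding Str_def strategy1_def
    by (rule finite_subset[rotated, OF finite_Pow_iff[THEN iffD2]]) blast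
  have "E1 V E owner \<in> Str" unfolding Str_def strategy1_def E1_def using ar unfolding arena_def by blast
  hence neS: "Str \<noteq> {}" by blast
  fix s assume s: "s \<in> insert None (Some ` V)"
  show "prof_le (valuation V E owner c \<sigma>a s) (valuation V E owner c \<sigma>b s)"
  proof (cases s)
    case None thus ?thesis by (simp add: valuation_def prof_le_def)
  next
    case (Some v)
    have sW: "s \<in> W" using s W_def by simp
    define P where "P \<sigma> \<tau> = play_profiles c (\<sigma> \<union> \<tau>) s" for \<sigma> \<tau>
    define T where "T \<sigma> = (\<lambda>\<tau>. max_prof (P \<sigma> \<tau>)) ` Str" for \<sigma>
    have val: "valuation V E owner c \<sigma> s = min_prof (T \<sigma>)" for \<sigma>
      unfolding valuation_def T_def P_def Str_def using Some by (auto intro!: arg_cong[where f=min_prof])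
    have mx: "max_prof (P \<sigma> \<tau>) \<in> P \<sigma> \<tau> \<and> (\<forall>q\<in>P \<sigma> \<tau>. prof_le q (max_prof (P \<sigma> \<tau>)))"
      if "strategy0 V E owner \<sigma>" "reasonable V E owner c \<sigma>" "\<tau> \<in> Str" for \<sigma> \<tau>
    proof -
      have t1: "strategy1 V E owner \<tau>" using that Str_def by simp
      have tg: "y \<in> W" if "(x, y) \<in> \<sigma> \<union> \<tau>" for x y
        using tgt[OF ar \<open>strategy0 V E owner \<sigma>\<close> t1 that] W_def by simp
      show ?thesis unfolding P_def
        by (rule max_prof_prop, rule has_max[OF finW sW tg goodF[OF ar that(1) t1 that(2)]])
    qed
    have mn: "min_prof (T \<sigma>) \<in> T \<sigma> \<and> (\<forall>q\<in>T \<sigma>. prof_le (min_prof (T \<sigma>)) q)" for \<sigma>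
      by (rule min_prof_prop, rule exists_min) (use finS neS T_def in auto)
    obtain \<tau>b where tb: "\<tau>b \<in> Str" "min_prof (T \<sigma>b) = max_prof (P \<sigma>b \<tau>b)"
      using mn[of \<sigma>b] unfolding T_def by blast
    have t1: "strategy1 V E owner \<tau>b" using tb Str_def by simp
    have 1: "prof_le (min_prof (T \<sigma>a)) (max_prof (P \<sigma>a \<tau>b))"
      using mn[of \<sigma>a] tb unfolding T_def by blast
    have "P \<sigma>a \<tau>b \<subseteq> P \<sigma>b \<tau>b" unfolding P_def
    proof (rule mono_profiles[OF _ sW])
      show "\<sigma>a \<union> \<tau>b \<subseteq> \<sigma>b \<union> \<tau>b" using sub by blast
    next
      fix x y assume "(x, y) \<in> \<sigma>a \<union> \<tau>b"
      thus "y \<in> W" using tgt[OF ar sa t1] W_def by simp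
    next
      fix x y assume "x \<in> W" "(x, y) \<in> \<sigma>b \<union> \<tau>b"
      thus "\<exists>z. (x, z) \<in> \<sigma>a \<union> \<tau>b" using deadF[OF ar sa sb t1] W_def by blast
    qed
    hence 2: "prof_le (max_prof (P \<sigma>a \<tau>b)) (max_prof (P \<sigma>b \<tau>b))"
      using mx[OF sa ra tb(1)] mx[OF sb rb tb(1)] by blast
    show ?thesis unfolding val using 1 2 tb(2) prof_le_trans by metis
  qed
qed

end
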